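(* For all integers $m,r\ge 0$ and $n\ge 1$, and all real $x\neq 0$, $$H_{m+r,n}(x)=m!\,r!\,n\,n!\sum_{k=0}^{m}\sum_{\nu=0}^{k}\sum_{j=0}^{\nu}\alpha_{j,\nu}\,\frac{\Gamma(n+k-\nu)}{(k-\nu)!\,\nu!}\,\frac{(-x)^{\nu}}{x^{n+k}}\,\frac{H_{m-k,n}(x)}{(m-k)!\,n!}\,\frac{H_{r-\nu+j,\,n-j}(x)}{(r-\nu+j)!\,(n-j)!},$$ where any term with $r-\nu+j<0$ or $n-j<0$ is interpreted as $0$.
   Context: For integers $m,n\ge 0$, the two-index Hermite polynomial is $H_{m,n}(x)=\left(-\frac{d}{dx}+2x\right)^m(x^n)$, i.e. the operator $f\mapsto -f'+2xf$ applied $m$ times to $x^n$; by convention $H_{m,n}=0$ whenever $m<0$ or $n<0$. The numbers $\alpha_{j,\nu}$ ($0\le j\le \nu$) are defined by $\alpha_{0,\nu}=2^\nu$, $\alpha_{\nu,\nu}=1$, and $\alpha_{j,\nu}=2\alpha_{j,\nu-1}+\alpha_{j-1,\nu-1}$ for $1\le j<\nu$. $\Gamma$ is the Euler Gamma function. *)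

theory Defs
  imports "HOL-Analysis.Analysis" "HOL-Computational_Algebra.Polynomial"
begin

definition hop :: "real poly \<Rightarrow> real poly" where
  "hop p = - pderiv p + [:0, 2:] * p"

definition Hpoly :: "nat \<Rightarrow> nat \<Rightarrow> real poly" where
  "Hpoly m n = (hop ^^ m) (monom 1 n)"

definition H :: "nat \<Rightarrow> nat \<Rightarrow> real \<Rightarrow> real" where
  "H m n x = poly (Hpoly m n) x"

text \<open>alpha j nu for 0 \<le> j \<le> nu (values outside this range are irrelevant).\<close>
fun alpha :: "nat \<Rightarrow> nat \<Rightarrow> real" where
  "alpha 0 v = 2 ^ v"
| "alpha (Suc j) 0 = 0"
| "alpha (Suc j) (Suc v) =
     (if j = v then 1 else if v < j then 0 else 2 * alpha (Suc j) v + alpha j v)"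

end

theory Submission
  imports Defs
begin


lemma pascal_sum:
  fixes G :: "nat \<Rightarrow> 'a::comm_ring_1"
  shows "(\<Sum>j\<le>Suc v. of_nat (Suc v choose j) * G j) =
         (\<Sum>j\<le>v. of_nat (v choose j) * G j) + (\<Sum>j\<le>v. of_nat (v choose j) * G (Suc j))"
proof -
  have a: "(\<Sum>j\<le>Suc v. of_nat (Suc v choose j) * G j) = G 0 + (\<Sum>j\<le>v. of_nat (Suc v choose Suc j) * G (Suc j))"
    by (subst sum.atMost_Suc_shift) simp
  have b: "(\<Sum>j\<le>v. of_nat (v choose j) * G j) = G 0 + (\<Sum>j\<le>v. of_nat (v choose Suc j) * G (Suc j))"
  proof -
    have "(\<Sum>j\<le>v. of_nat (v choose j) * G j) = (\<Sum>j\<le>Suc v. of_nat (v choose j) * G j)"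
      by (simp add: binomial_eq_0)
    also have "\<dots> = G 0 + (\<Sum>j\<le>v. of_nat (v choose Suc j) * G (Suc j))"
      by (subst sum.atMost_Suc_shift) simp
    finally show ?thesis .
  qed
  show ?thesis using a b by (simp add: sum.distrib algebra_simps)
qed


lemma pascal_sum_smult:
  fixes G :: "nat \<Rightarrow> real poly"
  shows "(\<Sum>j\<le>Suc v. smult (of_nat (Suc v choose j)) (G j)) =
         (\<Sum>j\<le>v. smult (of_nat (v choose j)) (G j)) + (\<Sum>j\<le>v. smult (of_nat (v choose j)) (G (Suc j)))"
  using pascal_sum[of v G] by (simp add: of_nat_mult_conv_smult)

lemmas PS = smult_add_right smult_diff_right smult_minus_right pderiv_add pderiv_diff pderiv_minus pderiv_smult pderiv_mult pderiv_pCons smult_smult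

lemma smult_sum2: "smult c (\<Sum>i\<in>A. f i) = (\<Sum>i\<in>A. smult c (f i))"
  by (induction A rule: infinite_finite_induct) (simp_all add: smult_add_right)

lemma hop_add: "hop (p + q) = hop p + hop q"
  by (simp add: hop_def PS algebra_simps)
lemma hop_smult: "hop (smult c p) = smult c (hop p)"
  by (simp add: hop_def PS algebra_simps)
lemma hop_0: "hop 0 = 0" by (simp add: hop_def)
lemma hop_sum: "hop (\<Sum>i\<in>A. f i) = (\<Sum>i\<in>A. hop (f i))"
  by (induction A rule: infinite_finite_induct) (simp_all add: hop_add hop_0)

lemma Hpoly_Suc: "Hpoly (Suc m) n = hop (Hpoly m n)"
  by (simp add: Hpoly_def)
lemma Hpoly_add: "Hpoly (m + r) n = (hop ^^ m) (Hpoly r n)"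
  by (simp add: Hpoly_def funpow_add)

lemma D_hop: "pderiv (hop p) = hop (pderiv p) + smult 2 p"
  by (simp add: hop_def PS algebra_simps)

lemma D_H: "pderiv (Hpoly r n) = smult (2 * real r) (Hpoly (r - 1) n) + smult (real n) (Hpoly r (n - 1))"
proof (induction r)
  case 0
  then show ?case by (simp add: Hpoly_def pderiv_monom smult_monom)
next
  case (Suc r)
  have "pderiv (Hpoly (Suc r) n) = hop (pderiv (Hpoly r n)) + smult 2 (Hpoly r n)"
    by (simp add: Hpoly_Suc D_hop)
  also have "\<dots> = smult (2 * real r) (hop (Hpoly (r - 1) n)) + smult (real n) (Hpoly (Suc r) (n - 1)) + smult 2 (Hpoly r n)"
    by (simp add: Suc hop_add hop_smult Hpoly_Suc)
  also have "smult (2 * real r) (hop (Hpoly (r - 1) n)) = smult (2 * real r) (Hpoly r n)"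
    by (cases r) (simp_all add: Hpoly_Suc)
  finally show ?case by (simp add: algebra_simps smult_add_left)
qed

fun ff :: "nat \<Rightarrow> nat \<Rightarrow> real" where
  "ff r 0 = 1"
| "ff r (Suc i) = real r * ff (r - 1) i"

lemma ff_zero: "r < i \<Longrightarrow> ff r i = 0"
proof (induction i arbitrary: r)
  case 0 then show ?case by simp
next
  case (Suc i) then show ?case by (cases r) auto
qed

lemma ff_fact: "i \<le> r \<Longrightarrow> ff r i = fact r / fact (r - i)"
proof (induction i arbitrary: r)
  case 0 then show ?case by simp
next
  case (Suc i)
  then obtain r' where r: "r = Suc r'" by (cases r) auto
  with Suc show ?case by (simp add: fact_Suc)
qed

lemma pderiv_funpow_add: "(pderiv ^^ v) (p + q) = (pderiv ^^ v) p + (pderiv ^^ v) q"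
  by (induction v) (simp_all add: pderiv_add)
lemma pderiv_funpow_smult: "(pderiv ^^ v) (smult c p) = smult c ((pderiv ^^ v) p)"
  by (induction v) (simp_all add: pderiv_smult)

lemma DH_iter:
  "(pderiv ^^ v) (Hpoly r n) = (\<Sum>j\<le>v. smult (of_nat (v choose j) * (2 ^ (v - j) * ff r (v - j) * ff n j))
       (Hpoly (r - (v - j)) (n - j)))"
proof (induction v arbitrary: r n)
  case 0
  then show ?case by simp
next
  case (Suc v)
  define G where "G j = smult (2 ^ (Suc v - j) * ff r (Suc v - j) * ff n j) (Hpoly (r - (Suc v - j)) (n - j))" for j
  have "(pderiv ^^ Suc v) (Hpoly r n) = (pderiv ^^ v) (pderiv (Hpoly r n))"
    by (simp add: funpow_Suc_right del: funpow.simps)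
  also have "\<dots> = smult (2 * real r) ((pderiv ^^ v) (Hpoly (r - 1) n)) + smult (real n) ((pderiv ^^ v) (Hpoly r (n - 1)))"
    by (simp add: D_H pderiv_funpow_add pderiv_funpow_smult)
  also have "\<dots> = (\<Sum>j\<le>v. smult (of_nat (v choose j)) (G j)) + (\<Sum>j\<le>v. smult (of_nat (v choose j)) (G (Suc j)))"
    unfolding Suc smult_sum2 sum.distrib
  proof (intro arg_cong2[where f="(+)"] sum.cong refl)
    fix j assume j: "j \<in> {..v}"
    then have e: "Suc v - j = Suc (v - j)" by auto
    show "smult (2 * real r) (smult (of_nat (v choose j) * (2 ^ (v - j) * ff (r - 1) (v - j) * ff n j)) (Hpoly (r - 1 - (v - j)) (n - j))) =
         smult (of_nat (v choose j)) (G j)"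
      unfolding G_def e by (simp add: algebra_simps)
  next
    fix j assume j: "j \<in> {..v}"
    show "smult (real n) (smult (of_nat (v choose j) * (2 ^ (v - j) * ff r (v - j) * ff (n - 1) j)) (Hpoly (r - (v - j)) (n - 1 - j))) =
         smult (of_nat (v choose j)) (G (Suc j))"
      unfolding G_def by (simp add: algebra_simps)
  qed
  also have "\<dots> = (\<Sum>j\<le>Suc v. smult (of_nat (Suc v choose j)) (G j))"
    by (rule pascal_sum_smult[symmetric])
  finally show ?case unfolding G_def by (simp add: algebra_simps)
qed


definition X :: "real poly" where "X = [:0, 1:]"
lemma pderiv_X [simp]: "pderiv X = 1" by (simp add: X_def pderiv_pCons)
lemma two_X: "[:0, 2:] = smult 2 X" by (simp add: X_def)

lemma pderiv_sum2: "pderiv (\<Sum>i\<in>A. f i) = (\<Sum>i\<in>A. pderiv (f i))"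
  by (induction A rule: infinite_finite_induct) (simp_all add: pderiv_add)

lemma Xd: "X * pderiv (X ^ v * R) = X ^ Suc v * pderiv R + smult (real v) (X ^ v * R)"
proof (cases v)
  case 0 then show ?thesis by simp
next
  case (Suc w)
  have "pderiv (X ^ v * R) = X ^ v * pderiv R + R * smult (real v) (X ^ w)"
    unfolding Suc pderiv_mult pderiv_power_Suc by (simp add: pderiv_pCons)
  then show ?thesis unfolding Suc by (simp add: algebra_simps)
qed

fun Qp :: "nat \<Rightarrow> nat \<Rightarrow> real poly \<Rightarrow> real poly" where
  "Qp n 0 P = P"
| "Qp n (Suc k) P = X * pderiv (Qp n k P) - smult (real (n + k)) (Qp n k P)"

lemma Q_formula:
  "Qp n k P = (\<Sum>v\<le>k. smult (of_nat (k choose v))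
      (smult ((-1) ^ (k - v) * pochhammer (real n) (k - v)) (X ^ v * (pderiv ^^ v) P)))"
proof (induction k)
  case 0 then show ?case by simp
next
  case (Suc k)
  define G where "G v = smult ((-1) ^ (Suc k - v) * pochhammer (real n) (Suc k - v)) (X ^ v * (pderiv ^^ v) P)" for v
  have "Qp n (Suc k) P = (\<Sum>v\<le>k. smult (of_nat (k choose v))
      (smult ((-1) ^ (k - v) * pochhammer (real n) (k - v))
        (X * pderiv (X ^ v * (pderiv ^^ v) P) - smult (real (n + k)) (X ^ v * (pderiv ^^ v) P))))"
    by (simp add: Suc pderiv_sum2 sum_distrib_left smult_sum2 pderiv_smult
         smult_diff_right sum_subtractf mult_smult_right mult_ac)
  also have "\<dots> = (\<Sum>v\<le>k. smult (of_nat (k choose v)) (G v)) + (\<Sum>v\<le>k. smult (of_nat (k choose v)) (G (Suc v)))"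
    unfolding sum.distrib[symmetric]
  proof (rule sum.cong[OF refl])
    fix v assume "v \<in> {..k}"
    then have vk: "v \<le> k" by simp
    then have e: "Suc k - v = Suc (k - v)" by auto
    have p: "pochhammer (real n) (Suc (k - v)) = pochhammer (real n) (k - v) * (real n + real (k - v))"
      by (simp add: pochhammer_Suc)
    show "smult (of_nat (k choose v))
      (smult ((-1) ^ (k - v) * pochhammer (real n) (k - v))
        (X * pderiv (X ^ v * (pderiv ^^ v) P) - smult (real (n + k)) (X ^ v * (pderiv ^^ v) P))) =
      smult (of_nat (k choose v)) (G v) + smult (of_nat (k choose v)) (G (Suc v))"
      unfolding G_def Xd e p using vk
      by (intro poly_eqI) (simp add: algebra_simps of_nat_diff coeff_pCons split: nat.split)
  qed
  also have "\<dots> = (\<Sum>v\<le>Suc k. smult (of_nat (Suc k choose v)) (G v))"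
    by (rule pascal_sum_smult[symmetric])
  finally show ?case unfolding G_def .
qed


definition L :: "nat \<Rightarrow> real poly \<Rightarrow> real poly" where
  "L N S = - (X * pderiv S) + smult (real N) S + smult 2 (X ^ 2 * S)"

lemma L_sum: "L N (\<Sum>i\<in>A. f i) = (\<Sum>i\<in>A. L N (f i))"
  by (induction A rule: infinite_finite_induct) (simp_all add: L_def pderiv_add algebra_simps smult_add_right smult_diff_right)
lemma L_smult: "L N (smult c p) = smult c (L N p)"
  by (intro poly_eqI) (simp add: L_def pderiv_smult algebra_simps coeff_pCons split: nat.split)

lemma L_step: "X ^ Suc N * hop y = L N (X ^ N * y)"
proof -
  have "X * pderiv (X ^ N * y) = X ^ Suc N * pderiv y + smult (real N) (X ^ N * y)" by (rule Xd)
  then show ?thesis unfolding L_def hop_def two_X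
    by (simp add: algebra_simps power2_eq_square smult_add_right smult_diff_right)
qed

lemma L_term:
  assumes "a + k = m"
  shows "L (n + m) (X ^ a * Hh * Q) = X ^ Suc a * hop Hh * Q - X ^ a * Hh * (X * pderiv Q - smult (real (n + k)) Q)"
proof -
  have 1: "X * pderiv (X ^ a * (Hh * Q)) = X ^ Suc a * pderiv (Hh * Q) + smult (real a) (X ^ a * (Hh * Q))" by (rule Xd)
  show ?thesis using 1 unfolding L_def hop_def two_X assms[symmetric]
    by (simp add: algebra_simps pderiv_mult power2_eq_square smult_add_right smult_diff_right smult_add_left)
qed


lemma X_monom: "X = monom 1 1"
  by (simp add: X_def monom_Suc)
lemma X_pow: "X ^ n = monom 1 n"
  unfolding X_monom monom_power by simp

lemma leibniz:
  "X ^ (n + m) * (hop ^^ m) P = (\<Sum>k\<le>m. smult (of_nat (m choose k))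
      (smult ((-1) ^ k) (X ^ (m - k) * Hpoly (m - k) n * Qp n k P)))"
proof (induction m)
  case 0 then show ?case by (simp add: Hpoly_def X_pow)
next
  case (Suc m)
  define G where "G k = smult ((-1) ^ k) (X ^ (Suc m - k) * Hpoly (Suc m - k) n * Qp n k P)" for k
  have "X ^ (n + Suc m) * (hop ^^ Suc m) P = L (n + m) (X ^ (n + m) * (hop ^^ m) P)"
    using L_step[of "n + m" "(hop ^^ m) P"] by simp
  also have "\<dots> = (\<Sum>k\<le>m. smult (of_nat (m choose k))
      (smult ((-1) ^ k) (L (n + m) (X ^ (m - k) * Hpoly (m - k) n * Qp n k P))))"
    unfolding Suc L_sum L_smult ..
  also have "\<dots> = (\<Sum>k\<le>m. smult (of_nat (m choose k)) (G k)) + (\<Sum>k\<le>m. smult (of_nat (m choose k)) (G (Suc k)))"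
    unfolding sum.distrib[symmetric]
  proof (rule sum.cong[OF refl])
    fix k assume "k \<in> {..m}"
    then have km: "m - k + k = m" and e: "Suc m - k = Suc (m - k)" by auto
    show "smult (of_nat (m choose k)) (smult ((-1) ^ k) (L (n + m) (X ^ (m - k) * Hpoly (m - k) n * Qp n k P))) =
      smult (of_nat (m choose k)) (G k) + smult (of_nat (m choose k)) (G (Suc k))"
      unfolding L_term[OF km] G_def e Hpoly_Suc
      by (intro poly_eqI) (simp add: algebra_simps)
  qed
  also have "\<dots> = (\<Sum>k\<le>Suc m. smult (of_nat (Suc m choose k)) (G k))"
    by (rule pascal_sum_smult[symmetric])
  finally show ?case unfolding G_def .
qed



lemma alpha_eq: "alpha j v = of_nat (v choose j) * 2 ^ (v - j)"
proof (induction j v rule: alpha.induct)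
  case (1 v) then show ?case by simp
next
  case (2 j) then show ?case by simp
next
  case (3 j v)
  show ?case
  proof (cases "j = v")
    case True then show ?thesis by simp
  next
    case False
    show ?thesis
    proof (cases "v < j")
      case True with False show ?thesis by (simp add: binomial_eq_0)
    next
      case nlt: False
      with False have jv: "j < v" by simp
      then have e: "v - j = Suc (v - Suc j)" by simp
      have "alpha (Suc j) (Suc v) = 2 * alpha (Suc j) v + alpha j v" using False nlt by simp
      also have "\<dots> = of_nat (Suc v choose Suc j) * 2 ^ (Suc v - Suc j)"
      proof -
        have t: "(2::real) ^ (v - j) = 2 * 2 ^ (v - Suc j)" unfolding e by simp
        show ?thesis using 3 False nlt by (simp add: algebra_simps t)
      qed
      finally show ?thesis .
    qed
  qed
qed

lemma poch_fact: "n \<ge> 1 \<Longrightarrow> pochhammer (real n) i = fact (n + i - 1) / fact (n - 1)"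
proof (induction i)
  case 0 then show ?case by simp
next
  case (Suc i)
  have "fact (n + Suc i - 1) = (real n + real i) * (fact (n + i - 1) :: real)"
    using Suc.prems by (simp add: fact_reduce[of "n + i"] of_nat_diff)
  then show ?case using Suc by (simp add: pochhammer_Suc)
qed

lemma abstract_eq:
  fixes fm fr nn fn al Gm fb fv sv xv xnk A fa B fe fnj fk sk sb xa ff1 fj fc t :: real
  assumes "sk * sb = sv" "fn = nn * ff1" "al = fv / (fj * fc) * t"
    "fm \<noteq> 0" "fr \<noteq> 0" "fb \<noteq> 0" "fv \<noteq> 0" "xnk \<noteq> 0" "fa \<noteq> 0" "fe \<noteq> 0" "fnj \<noteq> 0"
    "fk \<noteq> 0" "xa \<noteq> 0" "ff1 \<noteq> 0" "fj \<noteq> 0" "fc \<noteq> 0" "fn \<noteq> 0"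
  shows "fm * fr * nn * fn * (al * (Gm / (fb * fv)) * ((sv * xv) / xnk) * (A / (fa * fn)) * (B / (fe * fnj)))
    = (fm / (fk * fa) * (sk * (xa * A * (fk / (fv * fb) * (sb * (Gm / ff1)) * xv *
        (fv / (fj * fc) * (t * (fr / fe) * (fn / fnj)) * B))))) / (xnk * xa)"
proof -
  have i: "fv * inverse fv = 1" "fk * inverse fk = 1" "xa * inverse xa = 1" "ff1 * inverse ff1 = 1" "fn * inverse fn = 1"
    using assms(7,12,13,14,17) by simp_all
  show ?thesis unfolding assms(1)[symmetric] assms(3) divide_inverse inverse_mult_distrib
    using i assms(2) by algebra
qed

lemma term_eq:
  fixes x :: real
  assumes n1: "n \<ge> 1" and x: "x \<noteq> 0" and jv: "j \<le> v" and vk: "v \<le> k" and km: "k \<le> m"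
  shows "fact m * fact r * real n * fact n *
       (if v \<le> r + j \<and> j \<le> n then
          alpha j v * (Gamma (real (n + k - v)) / (fact (k - v) * fact v))
          * ((- x) ^ v / x ^ (n + k))
          * (A / (fact (m - k) * fact n))
          * (B / (fact (r + j - v) * fact (n - j)))
        else 0) =
     (of_nat (m choose k) * ((-1) ^ k * (x ^ (m - k) * A *
       (of_nat (k choose v) * ((-1) ^ (k - v) * pochhammer (real n) (k - v)) * x ^ v *
        (of_nat (v choose j) * (2 ^ (v - j) * ff r (v - j) * ff n j) * B))))) / x ^ (n + m)"
proof (cases "v \<le> r + j \<and> j \<le> n")
  case False
  then have "ff r (v - j) = 0 \<or> ff n j = 0" by (auto intro: ff_zero)
  with False show ?thesis by auto
next
  case True
  then have rv: "v - j \<le> r" and jn: "j \<le> n" by auto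
  have "n + k - v \<noteq> 0" using n1 vk by simp
  then obtain q where q: "n + k - v = Suc q" by (cases "n + k - v") auto
  have G: "Gamma (real (n + k - v)) = fact (n + k - v - 1)"
    unfolding q of_nat_Suc diff_Suc_1 by (rule Gamma_fact)
  have P: "pochhammer (real n) (k - v) = fact (n + k - v - 1) / fact (n - 1)"
    using poch_fact[OF n1, of "k - v"] vk by simp
  have F1: "ff r (v - j) = fact r / fact (r + j - v)" using ff_fact[OF rv] jv rv
    by (simp add: algebra_simps)
  have F2: "ff n j = fact n / fact (n - j)" using ff_fact[OF jn] .
  have fn: "(fact n :: real) = real n * fact (n - 1)" using n1 by (cases n) auto
  have pw1: "x ^ (n + m) = x ^ (n + k) * x ^ (m - k)" 
  proof -
    have "n + m = (n + k) + (m - k)" using km by simp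
    then show ?thesis by (metis power_add)
  qed
  have pw2: "(-x) ^ v = (-1) ^ v * x ^ v" by (rule power_minus)
  have pw3: "((-1::real) ^ k) * (-1) ^ (k - v) = (-1) ^ v"
  proof -
    obtain b where b: "k = v + b" using vk le_Suc_ex by blast
    have sq: "((-1::real) ^ b) * (-1) ^ b = 1" by (induction b) auto
    show ?thesis unfolding b using sq by (simp add: power_add)
  qed
  show ?thesis
    unfolding alpha_eq G P F1 F2
      binomial_fact[OF km] binomial_fact[OF vk] binomial_fact[OF jv] pw1 pw2 if_P[OF True]
    apply (rule abstract_eq[OF pw3 fn])
    using x by simp_all
qed



lemma poly_X [simp]: "poly X x = x" by (simp add: X_def)

lemma eval_main:
  fixes x :: real
  shows "x ^ (n + m) * H (m + r) n x = (\<Sum>k\<le>m. \<Sum>v\<le>k. \<Sum>j\<le>v.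
     of_nat (m choose k) * ((-1) ^ k * (x ^ (m - k) * H (m - k) n x *
       (of_nat (k choose v) * ((-1) ^ (k - v) * pochhammer (real n) (k - v)) * x ^ v *
        (of_nat (v choose j) * (2 ^ (v - j) * ff r (v - j) * ff n j) * H (r - (v - j)) (n - j) x)))))"
proof -
  have "x ^ (n + m) * H (m + r) n x = poly (X ^ (n + m) * (hop ^^ m) (Hpoly r n)) x"
    by (simp add: H_def Hpoly_add poly_power)
  also have "\<dots> = (\<Sum>k\<le>m. of_nat (m choose k) * ((-1) ^ k * (x ^ (m - k) * H (m - k) n x *
      (\<Sum>v\<le>k. of_nat (k choose v) * ((-1) ^ (k - v) * pochhammer (real n) (k - v)) * x ^ v *
        (\<Sum>j\<le>v. of_nat (v choose j) * (2 ^ (v - j) * ff r (v - j) * ff n j) * H (r - (v - j)) (n - j) x)))))"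
    unfolding leibniz Q_formula DH_iter
    by (simp add: poly_sum poly_power H_def mult.assoc)
  finally show ?thesis by (simp only: sum_distrib_left)
qed


theorem mainTheorem17:
  fixes m r n :: nat and x :: real
  assumes "n \<ge> 1" and "x \<noteq> 0"
  shows "H (m + r) n x =
    fact m * fact r * real n * fact n *
    (\<Sum>k = 0..m. \<Sum>\<nu> = 0..k. \<Sum>j = 0..\<nu>.
       (if \<nu> \<le> r + j \<and> j \<le> n then
          alpha j \<nu> * (Gamma (real (n + k - \<nu>)) / (fact (k - \<nu>) * fact \<nu>))
          * ((- x) ^ \<nu> / x ^ (n + k))
          * (H (m - k) n x / (fact (m - k) * fact n))
          * (H (r + j - \<nu>) (n - j) x / (fact (r + j - \<nu>) * fact (n - j)))
        else 0))"
proof -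
  have "H (m + r) n x = (x ^ (n + m) * H (m + r) n x) / x ^ (n + m)"
    using assms(2) by simp
  also have "\<dots> = (\<Sum>k\<le>m. \<Sum>v\<le>k. \<Sum>j\<le>v.
     of_nat (m choose k) * ((-1) ^ k * (x ^ (m - k) * H (m - k) n x *
       (of_nat (k choose v) * ((-1) ^ (k - v) * pochhammer (real n) (k - v)) * x ^ v *
        (of_nat (v choose j) * (2 ^ (v - j) * ff r (v - j) * ff n j) * H (r - (v - j)) (n - j) x)))) / x ^ (n + m))"
    unfolding eval_main by (simp only: sum_divide_distrib)
  also have "\<dots> = fact m * fact r * real n * fact n *
    (\<Sum>k\<le>m. \<Sum>\<nu>\<le>k. \<Sum>j\<le>\<nu>.
       (if \<nu> \<le> r + j \<and> j \<le> n then
          alpha j \<nu> * (Gamma (real (n + k - \<nu>)) / (fact (k - \<nu>) * fact \<nu>))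
          * ((- x) ^ \<nu> / x ^ (n + k))
          * (H (m - k) n x / (fact (m - k) * fact n))
          * (H (r + j - \<nu>) (n - j) x / (fact (r + j - \<nu>) * fact (n - j)))
        else 0))"
    unfolding sum_distrib_left
  proof (intro sum.cong refl)
    fix k v j assume k: "k \<in> {..m}" and v: "v \<in> {..k}" and j: "j \<in> {..v}"
    then have e: "r - (v - j) = r + j - v" by auto
    show "of_nat (m choose k) * ((-1) ^ k * (x ^ (m - k) * H (m - k) n x *
       (of_nat (k choose v) * ((-1) ^ (k - v) * pochhammer (real n) (k - v)) * x ^ v *
        (of_nat (v choose j) * (2 ^ (v - j) * ff r (v - j) * ff n j) * H (r - (v - j)) (n - j) x)))) / x ^ (n + m) =
      fact m * fact r * real n * fact n *
       (if v \<le> r + j \<and> j \<le> n then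
          alpha j v * (Gamma (real (n + k - v)) / (fact (k - v) * fact v))
          * ((- x) ^ v / x ^ (n + k))
          * (H (m - k) n x / (fact (m - k) * fact n))
          * (H (r + j - v) (n - j) x / (fact (r + j - v) * fact (n - j)))
        else 0)"
      unfolding e using k v j by (intro term_eq[symmetric] assms) auto
  qed
  finally show ?thesis by (simp only: atLeast0AtMost)
qed

end
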